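(* Let $F$ be a $C^1$ function on $\mathbb R$ with $\lim_{x\to-\infty}F(x)=-1$ and $\lim_{x\to+\infty}F(x)=1$. If $f\in C^2(\mathbb T,\mathbb R)$ is non-degenerate, then $$\mathcal H^0(\{f=0\})=-\frac12\int_0^{2\pi}F'\Big(\frac{f'(x)}{f(x)}\Big)\Big(\frac{f'(x)}{f(x)}\Big)'\,dx,$$ where the integrand is defined at points with $f(x)\neq0$ and the integral is understood as the sum of the (improper) integrals over the finitely many open arcs between consecutive zeros of $f$.
   Context: $\mathbb T=\mathbb R/2\pi\mathbb Z$, functions on $\mathbb T$ are identified with $2\pi$-periodic functions on $\mathbb R$, and $\mathcal H^0(\{f=0\})$ is the number of zeros of $f$ in one period $[0,2\pi)$. Set $\eta_f(x):=\sqrt{f(x)^2+f'(x)^2}$; $f$ is non-degenerate if $\min_x\eta_f(x)>0$. *)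

theory Defs
  imports "HOL-Analysis.Analysis"
begin

text \<open>eta_f(x) = sqrt(f(x)^2 + f'(x)^2); f is non-degenerate iff min eta_f > 0
  (the minimum exists by periodicity and continuity; we state it as a positive lower bound).\<close>
definition eta :: "(real \<Rightarrow> real) \<Rightarrow> (real \<Rightarrow> real) \<Rightarrow> real \<Rightarrow> real" where
  "eta f f' x = sqrt ((f x)\<^sup>2 + (f' x)\<^sup>2)"

definition nondegenerate :: "(real \<Rightarrow> real) \<Rightarrow> (real \<Rightarrow> real) \<Rightarrow> bool" where
  "nondegenerate f f' \<longleftrightarrow> (\<exists>c>0. \<forall>x. c \<le> eta f f' x)"

definition improper_has_integral :: "(real \<Rightarrow> real) \<Rightarrow> real \<Rightarrow> real \<Rightarrow> real \<Rightarrow> bool" where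
  "improper_has_integral h L a b \<longleftrightarrow>
     (\<forall>c d. a < c \<and> c \<le> d \<and> d < b \<longrightarrow> h integrable_on {c..d}) \<and>
     ((\<lambda>(c, d). integral {c..d} h) \<longlongrightarrow> L) (at_right a \<times>\<^sub>F at_left b)"

definition next_zero :: "(real \<Rightarrow> real) \<Rightarrow> real \<Rightarrow> real" where
  "next_zero f z = Inf {w. z < w \<and> f w = 0}"

end

theory Submission imports Defs begin

lemma hderiv:
  fixes F F' f f' f'' :: "real \<Rightarrow> real"
  assumes fd: "\<And>x. (f has_real_derivative f' x) (at x)"
    and f'd: "\<And>x. (f' has_real_derivative f'' x) (at x)"
    and Fd: "\<And>y. (F has_real_derivative F' y) (at y)"
    and nz: "f x \<noteq> 0"
  shows "((\<lambda>x. F (f' x / f x)) has_real_derivative (F' (f' x / f x) * deriv (\<lambda>y. f' y / f y) x)) (at x)"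
proof -
  have g: "((\<lambda>y. f' y / f y) has_real_derivative (f'' x * f x - f' x * f' x) / (f x * f x)) (at x)"
    using DERIV_divide[OF f'd fd nz] .
  then have "deriv (\<lambda>y. f' y / f y) x = (f'' x * f x - f' x * f' x) / (f x * f x)"
    by (rule DERIV_imp_deriv)
  then show ?thesis using DERIV_chain2[OF Fd g] by simp
qed

lemma hint:
  fixes F F' f f' f'' :: "real \<Rightarrow> real"
  assumes fd: "\<And>x. (f has_real_derivative f' x) (at x)"
    and f'd: "\<And>x. (f' has_real_derivative f'' x) (at x)"
    and Fd: "\<And>y. (F has_real_derivative F' y) (at y)"
    and ab: "a \<le> b" and nz: "\<And>x. x \<in> {a..b} \<Longrightarrow> f x \<noteq> 0"
  shows "((\<lambda>x. F' (f' x / f x) * deriv (\<lambda>y. f' y / f y) x) has_integral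
           (F (f' b / f b) - F (f' a / f a))) {a..b}"
  apply (rule fundamental_theorem_of_calculus[OF ab, where f="\<lambda>x. F (f' x / f x)", simplified])
  apply (subst has_real_derivative_iff_has_vector_derivative[symmetric])
  apply (rule has_field_derivative_at_within)
  apply (rule hderiv[OF fd f'd Fd nz])
  apply auto
  done

lemma local0:
  fixes f f' :: "real \<Rightarrow> real"
  assumes fd: "\<And>x. (f has_real_derivative f' x) (at x)"
    and f'd: "\<And>x. (f' has_real_derivative f'' x) (at x)"
    and z0: "f z = 0" and nz: "f' z \<noteq> 0"
  shows "eventually (\<lambda>x. 0 < f x / ((x - z) * f' x)) (at z)"
    and "((\<lambda>x. f x / f' x) \<longlongrightarrow> 0) (at z)"
proof -
  have c1: "isCont f z" using fd DERIV_isCont by blast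
  have c2: "isCont f' z" using f'd DERIV_isCont by blast
  have q: "((\<lambda>y. (f y - f z) / (y - z)) \<longlongrightarrow> f' z) (at z)"
    using fd[of z] by (simp add: DERIV_def has_field_derivative_iff)
  have c2': "(f' \<longlongrightarrow> f' z) (at z)" using c2 isCont_def by blast
  have "((\<lambda>y. ((f y - f z) / (y - z)) / f' y) \<longlongrightarrow> f' z / f' z) (at z)"
    by (rule tendsto_divide[OF q c2' nz])
  then have "((\<lambda>y. f y / ((y - z) * f' y)) \<longlongrightarrow> 1) (at z)"
    using nz z0 by simp
  then show "eventually (\<lambda>x. 0 < f x / ((x - z) * f' x)) (at z)"
    by (rule order_tendstoD) simp
  have c1': "(f \<longlongrightarrow> f z) (at z)" using c1 isCont_def by blast
  show "((\<lambda>x. f x / f' x) \<longlongrightarrow> 0) (at z)"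
    using tendsto_divide[OF c1' c2' nz] z0 by simp
qed

lemma limits0:
  fixes f f' :: "real \<Rightarrow> real"
  assumes fd: "\<And>x. (f has_real_derivative f' x) (at x)"
    and f'd: "\<And>x. (f' has_real_derivative f'' x) (at x)"
    and z0: "f z = 0" and nz: "f' z \<noteq> 0"
  shows "filterlim (\<lambda>x. f' x / f x) at_top (at_right z)"
    and "filterlim (\<lambda>x. f' x / f x) at_bot (at_left z)"
proof -
  note L = local0[OF fd f'd z0 nz]
  have t1: "((\<lambda>x. f x / f' x) \<longlongrightarrow> 0) (at_right z)"
    using L(2) tendsto_mono at_within_le_at by blast
  have t2: "((\<lambda>x. f x / f' x) \<longlongrightarrow> 0) (at_left z)"
    using L(2) tendsto_mono at_within_le_at by blast
  have e1: "eventually (\<lambda>x. 0 < f x / ((x - z) * f' x)) (at_right z)"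
    using L(1) filter_leD at_within_le_at by blast
  have e2: "eventually (\<lambda>x. 0 < f x / ((x - z) * f' x)) (at_left z)"
    using L(1) filter_leD at_within_le_at by blast
  have p1: "eventually (\<lambda>x. 0 < f x / f' x) (at_right z)"
    using e1 eventually_at_right_less[of z]
  proof (eventually_elim)
    case (elim x)
    have q: "0 < (f x / f' x) / (x - z)" using elim by (simp add: mult.commute)
    have e: "f x / f' x = ((f x / f' x) / (x - z)) * (x - z)" using elim by simp
    have "0 < ((f x / f' x) / (x - z)) * (x - z)" by (rule mult_pos_pos[OF q]) (use elim in simp)
    then show ?case using e by simp
  qed
  have lz: "eventually (\<lambda>y. y < z) (at_left z)" by (simp add: eventually_at_filter)
  have p2: "eventually (\<lambda>x. f x / f' x < 0) (at_left z)"
    using e2 lz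
  proof (eventually_elim)
    case (elim x)
    have q: "0 < (f x / f' x) / (x - z)" using elim by (simp add: mult.commute)
    have e: "f x / f' x = ((f x / f' x) / (x - z)) * (x - z)" using elim by simp
    have "((f x / f' x) / (x - z)) * (x - z) < 0" by (rule mult_pos_neg[OF q]) (use elim in simp)
    then show ?case using e by simp
  qed
  show "filterlim (\<lambda>x. f' x / f x) at_top (at_right z)"
    using filterlim_inverse_at_top[OF t1 p1] by simp
  show "filterlim (\<lambda>x. f' x / f x) at_bot (at_left z)"
    using filterlim_inverse_at_bot[OF t2 p2] by simp
qed

lemma nextz:
  fixes f f' :: "real \<Rightarrow> real"
  assumes fd: "\<And>x. (f has_real_derivative f' x) (at x)"
    and f'd: "\<And>x. (f' has_real_derivative f'' x) (at x)"
    and z0: "f z = 0" and nz: "f' z \<noteq> 0" and p: "f (z + 2 * pi) = 0"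
  shows "z < Inf {w. z < w \<and> f w = 0} \<and> f (Inf {w. z < w \<and> f w = 0}) = 0 \<and>
         (\<forall>x. z < x \<and> x < Inf {w. z < w \<and> f w = 0} \<longrightarrow> f x \<noteq> 0)"
proof -
  note L = local0[OF fd f'd z0 nz]
  have "eventually (\<lambda>x. f x \<noteq> 0) (at z)"
    using L(1) by eventually_elim auto
  then obtain d where d: "d > 0" "\<And>x. x \<noteq> z \<Longrightarrow> dist x z < d \<Longrightarrow> f x \<noteq> 0"
    unfolding eventually_at by blast
  have S: "{w. z < w \<and> f w = 0} = {w. z + d \<le> w \<and> f w = 0}"
  proof (auto)
    fix w assume "z < w" "f w = 0"
    then show "z + d \<le> w" using d(2)[of w] by (force simp: dist_real_def)
  next
    fix w assume "z + d \<le> w" then show "z < w" using d(1) by simp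
  qed
  have cf: "continuous_on UNIV f"
    using fd by (meson DERIV_isCont continuous_at_imp_continuous_on)
  have cl: "closed {w. z + d \<le> w \<and> f w = 0}"
    by (intro closed_Collect_conj closed_Collect_le closed_Collect_eq continuous_intros cf)
  have ne: "{w. z + d \<le> w \<and> f w = 0} \<noteq> {}"
  proof -
    have "z + 2 * pi \<in> {w. z < w \<and> f w = 0}" using p pi_gt_zero by simp
    then show ?thesis unfolding S by blast
  qed
  have bb: "bdd_below {w. z + d \<le> w \<and> f w = 0}" by (rule bdd_belowI[of _ "z + d"]) auto
  have I: "Inf {w. z + d \<le> w \<and> f w = 0} \<in> {w. z + d \<le> w \<and> f w = 0}"
    by (rule closed_contains_Inf[OF ne bb cl])
  show ?thesis
  proof (unfold S, intro conjI allI impI)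
    show "z < Inf {w. z + d \<le> w \<and> f w = 0}" using I d(1) by auto
    show "f (Inf {w. z + d \<le> w \<and> f w = 0}) = 0" using I by auto
    fix x assume x: "z < x \<and> x < Inf {w. z + d \<le> w \<and> f w = 0}"
    show "f x \<noteq> 0"
    proof
      assume "f x = 0"
      with x have "x \<in> {w. z < w \<and> f w = 0}" by simp
      then have "x \<in> {w. z + d \<le> w \<and> f w = 0}" by (subst S[symmetric])
      then have "Inf {w. z + d \<le> w \<and> f w = 0} \<le> x" by (rule cInf_lower[OF _ bb])
      with x show False by simp
    qed
  qed
qed

theorem proposition2:
  fixes F F' f f' f'' :: "real \<Rightarrow> real"
  assumes F_deriv: "\<And>y. (F has_real_derivative F' y) (at y)"
    and F'_cont: "continuous_on UNIV F'"
    and F_bot: "(F \<longlongrightarrow> -1) at_bot"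
    and F_top: "(F \<longlongrightarrow> 1) at_top"
    and f_deriv: "\<And>x. (f has_real_derivative f' x) (at x)"
    and f'_deriv: "\<And>x. (f' has_real_derivative f'' x) (at x)"
    and f''_cont: "continuous_on UNIV f''"
    and f_per: "\<And>x. f (x + 2 * pi) = f x"
    and nondeg: "nondegenerate f f'"
  shows "let Z = {x \<in> {0..<2 * pi}. f x = 0};
             h = (\<lambda>x. F' (f' x / f x) * deriv (\<lambda>y. f' y / f y) x)
         in (Z = {} \<longrightarrow>
               (\<exists>I. (h has_integral I) {0..2 * pi} \<and> real (card Z) = - (1/2) * I))
          \<and> (Z \<noteq> {} \<longrightarrow>
               (\<exists>I. (\<forall>z\<in>Z. improper_has_integral h (I z) z (next_zero f z))
                    \<and> real (card Z) = - (1/2) * (\<Sum>z\<in>Z. I z)))"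
proof -
  define Z where "Z = {x \<in> {0..<2 * pi}. f x = 0}"
  define h where "h = (\<lambda>x. F' (f' x / f x) * deriv (\<lambda>y. f' y / f y) x)"
  define G where "G = (\<lambda>x. F (f' x / f x))"
  obtain c where c: "c > 0" "\<And>x. c \<le> eta f f' x"
    using nondeg unfolding nondegenerate_def by blast
  have nzd: "f' x \<noteq> 0" if "f x = 0" for x
  proof
    assume "f' x = 0"
    then have "eta f f' x = 0" using that by (simp add: eta_def)
    with c show False by (metis not_le)
  qed
  have "((\<lambda>x. f (x + 2 * pi)) has_real_derivative f' (0 + 2 * pi)) (at 0)"
    using f_deriv DERIV_shift by blast
  then have "(f has_real_derivative f' (2 * pi)) (at 0)" using f_per by simp
  then have f'per: "f' (2 * pi) = f' 0" using DERIV_unique f_deriv by blast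
  have A: "Z = {} \<longrightarrow> (\<exists>I. (h has_integral I) {0..2 * pi} \<and> real (card Z) = - (1/2) * I)"
  proof
    assume Z: "Z = {}"
    have nz: "f x \<noteq> 0" if "x \<in> {0..2*pi}" for x
    proof (cases "x = 2 * pi")
      case True
      have "f 0 \<noteq> 0" using Z pi_gt_zero unfolding Z_def by auto
      then show ?thesis using True f_per[of 0] by simp
    next
      case False
      then show ?thesis using Z that unfolding Z_def by auto
    qed
    have "(h has_integral (G (2*pi) - G 0)) {0..2*pi}"
      unfolding h_def G_def by (rule hint[OF f_deriv f'_deriv F_deriv _ nz]) auto
    moreover have "G (2*pi) - G 0 = 0" using f'per f_per[of 0] by (simp add: G_def)
    ultimately show "\<exists>I. (h has_integral I) {0..2 * pi} \<and> real (card Z) = - (1/2) * I"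
      using Z by auto
  qed
  have B: "Z \<noteq> {} \<longrightarrow> (\<exists>I. (\<forall>z\<in>Z. improper_has_integral h (I z) z (next_zero f z))
                    \<and> real (card Z) = - (1/2) * (\<Sum>z\<in>Z. I z))"
  proof
    have imp: "improper_has_integral h (-2) z (next_zero f z)" if zZ: "z \<in> Z" for z
    proof -
      define w where "w = next_zero f z"
      have z0: "f z = 0" using zZ unfolding Z_def by auto
      have nz: "f' z \<noteq> 0" using nzd z0 .
      have p: "f (z + 2 * pi) = 0" using f_per z0 by simp
      have W: "z < w" "f w = 0" "\<And>x. z < x \<Longrightarrow> x < w \<Longrightarrow> f x \<noteq> 0"
        using nextz[OF f_deriv f'_deriv z0 nz p] unfolding w_def next_zero_def by auto
      have hi: "(h has_integral (G d - G c)) {c..d}" if "z < c" "c \<le> d" "d < w" for c d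
        unfolding h_def G_def
        by (rule hint[OF f_deriv f'_deriv F_deriv]) (use that W in auto)
      have lim1: "(G \<longlongrightarrow> 1) (at_right z)"
        unfolding G_def by (rule filterlim_compose[OF F_top limits0(1)[OF f_deriv f'_deriv z0 nz]])
      have lim2: "(G \<longlongrightarrow> -1) (at_left w)"
        unfolding G_def by (rule filterlim_compose[OF F_bot limits0(2)[OF f_deriv f'_deriv W(2) nzd[OF W(2)]]])
      have L: "((\<lambda>p. G (snd p) - G (fst p)) \<longlongrightarrow> -1 - 1) (at_right z \<times>\<^sub>F at_left w)"
        by (rule tendsto_diff[OF filterlim_compose[OF lim2 filterlim_snd] filterlim_compose[OF lim1 filterlim_fst]])
      define m where "m = (z + w) / 2"
      have m: "z < m" "m < w" using W(1) unfolding m_def by auto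
      have ev1: "eventually (\<lambda>c. z < c \<and> c < m) (at_right z)"
        unfolding eventually_at_right_field using m by auto
      have ev2: "eventually (\<lambda>d. m < d \<and> d < w) (at_left w)"
        unfolding eventually_at_left_field using m by auto
      have ev: "eventually (\<lambda>p. G (snd p) - G (fst p) = (\<lambda>(c, d). integral {c..d} h) p)
                  (at_right z \<times>\<^sub>F at_left w)"
        unfolding eventually_prod_filter
      proof (intro exI conjI allI impI)
        show "eventually (\<lambda>c. z < c \<and> c < m) (at_right z)" by (rule ev1)
        show "eventually (\<lambda>d. m < d \<and> d < w) (at_left w)" by (rule ev2)
        fix c d assume "z < c \<and> c < m" "m < d \<and> d < w"
        then show "G (snd (c, d)) - G (fst (c, d)) = (\<lambda>(c, d). integral {c..d} h) (c, d)"
          using integral_unique[OF hi[of c d]] by auto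
      qed
      have "((\<lambda>(c, d). integral {c..d} h) \<longlongrightarrow> -2) (at_right z \<times>\<^sub>F at_left w)"
        using tendsto_cong[OF ev] L by simp
      moreover have "\<forall>c d. z < c \<and> c \<le> d \<and> d < w \<longrightarrow> h integrable_on {c..d}"
        using hi by blast
      ultimately show ?thesis unfolding improper_has_integral_def w_def by blast
    qed
    assume "Z \<noteq> {}"
    show "\<exists>I. (\<forall>z\<in>Z. improper_has_integral h (I z) z (next_zero f z))
                    \<and> real (card Z) = - (1/2) * (\<Sum>z\<in>Z. I z)"
      by (rule exI[of _ "\<lambda>_. -2"]) (use imp in auto)
  qed
  show ?thesis unfolding Let_def Z_def[symmetric] h_def[symmetric] using A B by blast
qed

end
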